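(* Let $G$ and $H$ be graphs with vertex set $\omega$. Then: (i) $G^{<\alpha>}\le G$ for every ordinal $\alpha$; (ii) if $\alpha\le\beta$ then $G^{<\alpha>}\le G^{<\beta>}$; (iii) $G\le H$ if and only if $G^{<\alpha>}\le H$ for every $\alpha<\omega_1$.
   Context: Graphs are simple and loopless; $G\le H$ means there is a homomorphism (edge-preserving vertex map) $G\to H$. For a graph $G$ with vertex set $\omega$ and an ordinal $\alpha$, $G^{<\alpha>}$ is the graph whose vertices are all finite strictly decreasing sequences of ordinals $<\alpha$ (including the empty sequence), with $\{\nu,\mu\}$ an edge iff $\nu$ is a proper initial segment of $\mu$ and $\{\ell(\nu),\ell(\mu)\}\in E(G)$, where $\ell(\nu)\in\omega$ denotes the length of $\nu$. *)

theory Defs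
  imports Main "HOL-Library.Sublist"
begin

definition is_graph :: "(nat \<Rightarrow> nat \<Rightarrow> bool) \<Rightarrow> bool" where
  "is_graph E \<longleftrightarrow> (\<forall>x y. E x y \<longrightarrow> E y x) \<and> (\<forall>x. \<not> E x x)"

definition hom_le :: "'v set \<Rightarrow> ('v \<Rightarrow> 'v \<Rightarrow> bool) \<Rightarrow> 'w set \<Rightarrow> ('w \<Rightarrow> 'w \<Rightarrow> bool) \<Rightarrow> bool" where
  "hom_le V E W F \<longleftrightarrow> (\<exists>f. (\<forall>x\<in>V. f x \<in> W) \<and> (\<forall>x\<in>V. \<forall>y\<in>V. E x y \<longrightarrow> F (f x) (f y)))"

(* An ordinal alpha is represented by a well-order r (non-strict, as in HOL's Well_order);
   the ordinals < alpha are the elements of Field r.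
   Vertices of G^<alpha>: finite strictly decreasing sequences of elements of Field r. *)
definition dec_seqs :: "'a rel \<Rightarrow> 'a list set" where
  "dec_seqs r = {xs. set xs \<subseteq> Field r \<and> sorted_wrt (\<lambda>x y. (y, x) \<in> r \<and> y \<noteq> x) xs}"

definition seq_edge :: "(nat \<Rightarrow> nat \<Rightarrow> bool) \<Rightarrow> 'a list \<Rightarrow> 'a list \<Rightarrow> bool" where
  "seq_edge E \<nu> \<mu> \<longleftrightarrow> (strict_prefix \<nu> \<mu> \<or> strict_prefix \<mu> \<nu>) \<and> E (length \<nu>) (length \<mu>)"

end

theory Submission
  imports Defs "HOL-Library.Countable"
begin


lemma part1: "hom_le (dec_seqs r) (seq_edge G) UNIV G"
  unfolding hom_le_def seq_edge_def by (rule exI[of _ length]) auto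

lemma part2:
  assumes "(r, s) \<in> ordLeq"
  shows "hom_le (dec_seqs r) (seq_edge G) (dec_seqs s) (seq_edge G)"
proof -
  from assms obtain f where W: "Well_order r" and E: "embed r s f"
    unfolding ordLeq_def by auto
  have inj: "inj_on f (Field r)" using embed_inj_on[OF W E] .
  have fld: "f ` Field r \<subseteq> Field s" using embed_Field[OF E] .
  have cp: "\<And>a b. (a,b) \<in> r \<Longrightarrow> (f a, f b) \<in> s" using embed_compat[OF E] unfolding compat_def by blast
  have "map f \<nu> \<in> dec_seqs s" if "\<nu> \<in> dec_seqs r" for \<nu>
  proof -
    have s1: "set \<nu> \<subseteq> Field r" and s2: "sorted_wrt (\<lambda>x y. (y, x) \<in> r \<and> y \<noteq> x) \<nu>"
      using that unfolding dec_seqs_def by auto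
    have "sorted_wrt (\<lambda>x y. (y, x) \<in> s \<and> y \<noteq> x) (map f \<nu>)"
      unfolding sorted_wrt_map
      using s2
    proof (rule sorted_wrt_mono_rel[rotated])
      fix x y assume "x \<in> set \<nu>" "y \<in> set \<nu>" "(y, x) \<in> r \<and> y \<noteq> x"
      then show "(f y, f x) \<in> s \<and> f y \<noteq> f x"
        using cp inj s1 by (auto dest: inj_onD)
    qed
    then show ?thesis using s1 fld unfolding dec_seqs_def by auto
  qed
  moreover have "seq_edge G (map f a) (map f b)" if "seq_edge G a b" for a b
  proof -
    have "strict_prefix (map f a) (map f b)" if "strict_prefix a b" for a b :: "'a list"
      using that by (auto simp: strict_prefix_def prefix_def)
    then show ?thesis using that unfolding seq_edge_def by auto
  qed
  ultimately show ?thesis unfolding hom_le_def by (intro exI[of _ "map f"]) auto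
qed

lemma part3a:
  assumes "hom_le UNIV G UNIV H"
  shows "hom_le (dec_seqs t) (seq_edge G) UNIV H"
proof -
  from assms obtain g where "\<And>x y. G x y \<Longrightarrow> H (g x) (g y)" unfolding hom_le_def by auto
  then show ?thesis unfolding hom_le_def seq_edge_def
    by (intro exI[of _ "\<lambda>\<nu>. g (length \<nu>)"]) auto
qed



definition Rkb :: "(nat option \<times> nat option) set" where
  "Rkb = {(Some x, Some y)| x y. x < y} \<union> {(Some x, None)| x. True}"

lemma Rkb_irrefl: "\<forall>a. (a, a) \<notin> Rkb" by (auto simp: Rkb_def)

lemma Rkb_trans: "trans Rkb" unfolding trans_def Rkb_def by auto

lemma Rkb_total: "\<forall>a b. (a,b) \<in> Rkb \<or> a = b \<or> (b,a) \<in> Rkb"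
proof (intro allI)
  fix a b :: "nat option"
  show "(a,b) \<in> Rkb \<or> a = b \<or> (b,a) \<in> Rkb"
    by (cases a; cases b) (auto simp: Rkb_def)
qed

lemma Rkb_wf: "wf Rkb"
proof -
  define key where "key z = (case z of None \<Rightarrow> (1::nat, 0::nat) | Some x \<Rightarrow> (0, x))" for z
  have "Rkb \<subseteq> inv_image (less_than <*lex*> less_than) key"
    by (auto simp: Rkb_def key_def)
  then show ?thesis by (rule wf_subset[rotated]) auto
qed

definition enc :: "nat list \<Rightarrow> nat option list" where
  "enc a = map Some a @ [None]"

lemma lexord_nth:
  assumes "(x,y) \<in> lexord Rkb" "take k x = take k y" "k < length x" "k < length y"
  shows "(x!k, y!k) \<in> Rkb \<or> x!k = y!k"
proof -
  from assms(1) consider (pre) a v where "y = x @ a # v"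
    | (dif) u a b v w where "(a,b) \<in> Rkb" "x = u @ a # v" "y = u @ b # w"
    unfolding lexord_def by blast
  then show ?thesis
  proof cases
    case pre then show ?thesis using assms(3) by (simp add: nth_append)
  next
    case dif
    consider "k < length u" | "k = length u" | "k > length u" by linarith
    then show ?thesis
    proof cases
      case 1 then show ?thesis using dif by (simp add: nth_append)
    next
      case 2 then show ?thesis using dif by (simp add: nth_append)
    next
      case 3
      have "take k x ! length u = a" using 3 dif by (simp add: nth_append)
      moreover have "take k y ! length u = b" using 3 dif by (simp add: nth_append)
      ultimately have "a = b" using assms(2) by simp
      with dif Rkb_irrefl show ?thesis by auto
    qed
  qed
qed

fun build :: "('a list \<Rightarrow> 'a) \<Rightarrow> nat \<Rightarrow> 'a list" where
  "build F 0 = []"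
| "build F (Suc k) = build F k @ [F (build F k)]"

lemma length_build[simp]: "length (build F k) = k"
  by (induction k) auto

lemma take_build: "k \<le> m \<Longrightarrow> take k (build F m) = build F k"
proof (induction m)
  case 0 then show ?case by simp
next
  case (Suc m)
  show ?case
  proof (cases "k = Suc m")
    case True then show ?thesis by simp
  next
    case False
    then have "k \<le> m" using Suc.prems by simp
    then show ?thesis using Suc.IH by simp
  qed
qed

lemma eventually_const:
  fixes v :: "nat \<Rightarrow> nat option"
  assumes "\<forall>n\<ge>N. (v (Suc n), v n) \<in> Rkb \<or> v (Suc n) = v n"
  shows "\<exists>N'\<ge>N. \<forall>n\<ge>N'. v n = v N'"
proof -
  have "v N \<in> v ` {N..}" by auto
  then obtain m where m: "m \<in> v ` {N..}" "\<And>y. (y, m) \<in> Rkb \<Longrightarrow> y \<notin> v ` {N..}"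
    using Rkb_wf unfolding wf_eq_minimal by metis
  then obtain N' where N': "N' \<ge> N" "m = v N'" by auto
  have le: "(v n, v N') \<in> Rkb \<or> v n = v N'" if "n \<ge> N'" for n
    using that
  proof (induction n rule: dec_induct)
    case base then show ?case by simp
  next
    case (step n)
    have "(v (Suc n), v n) \<in> Rkb \<or> v (Suc n) = v n" using assms step.hyps N' by auto
    with step.IH Rkb_trans show ?case by (metis transD)
  qed
  have "v n = v N'" if "n \<ge> N'" for n
  proof -
    have "v n \<in> v ` {N..}" using that N' by auto
    then show ?thesis using le[OF that] m(2) N' by auto
  qed
  with N' show ?thesis by blast
qed

lemma kb_wf:
  assumes pc: "\<And>\<sigma> k. \<sigma> \<in> T \<Longrightarrow> take k \<sigma> \<in> T"
    and nb: "\<And>f. \<exists>k. map f [0..<k] \<notin> T"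
  shows "wf {(a,b). a \<in> T \<and> b \<in> T \<and> (enc a, enc b) \<in> lexord Rkb}"
proof (rule ccontr)
  assume "\<not> wf {(a,b). a \<in> T \<and> b \<in> T \<and> (enc a, enc b) \<in> lexord Rkb}"
  then obtain s where s: "\<And>i. s (Suc i) \<in> T \<and> s i \<in> T \<and> (enc (s (Suc i)), enc (s i)) \<in> lexord Rkb"
    unfolding wf_iff_no_infinite_down_chain by auto
  define x where "x n = enc (s n)" for n
  define P where "P k u \<longleftrightarrow> length u = k \<and> None \<notin> set u \<and> (\<exists>N. \<forall>n\<ge>N. take k (x n) = u)" for k u
  have step: "\<exists>c. P (Suc k) (u @ [c])" if "P k u" for k u
  proof -
    from that obtain N where lu: "length u = k" "None \<notin> set u" and N: "\<forall>n\<ge>N. take k (x n) = u"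
      unfolding P_def by auto
    have len: "k < length (x n)" if "n \<ge> N" for n
    proof (rule ccontr)
      assume "\<not> ?thesis" then have "take k (x n) = x n" by simp
      moreover have "None \<in> set (x n)" by (simp add: x_def enc_def)
      ultimately show False using N that lu by auto
    qed
    have mono: "\<forall>n\<ge>N. (x (Suc n) ! k, x n ! k) \<in> Rkb \<or> x (Suc n) ! k = x n ! k"
    proof (intro allI impI)
      fix n assume n: "N \<le> n"
      have "(x (Suc n), x n) \<in> lexord Rkb" using s[of n] by (simp add: x_def)
      moreover have "take k (x (Suc n)) = take k (x n)" using N n by simp
      ultimately show "(x (Suc n) ! k, x n ! k) \<in> Rkb \<or> x (Suc n) ! k = x n ! k"
        using lexord_nth len n by simp
    qed
    obtain N' where N': "N' \<ge> N" "\<forall>n\<ge>N'. x n ! k = x N' ! k"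
      using eventually_const[OF mono] by blast
    have tk: "take (Suc k) (x n) = u @ [x N' ! k]" if "n \<ge> N'" for n
    proof -
      have nN: "N \<le> n" using N'(1) that by simp
      have "take (Suc k) (x n) = take k (x n) @ [x n ! k]"
        by (rule take_Suc_conv_app_nth) (use len[OF nN] in simp)
      also have "\<dots> = u @ [x N' ! k]" using N[rule_format, OF nN] N'(2)[rule_format, OF that] by simp
      finally show ?thesis .
    qed
    have "x N' ! k \<noteq> None"
    proof
      assume c: "x N' ! k = None"
      have xn: "x n = u @ [None]" if "n \<ge> N'" for n
      proof -
        have "x n ! k = None" using N'(2)[rule_format, OF that] c by simp
        moreover have "k < length (x n)" using len[of n] N'(1) that by simp
        ultimately have "k = length (s n)"
          by (auto simp: x_def enc_def nth_append split: if_splits)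
        hence "x n = take (Suc k) (x n)" by (simp add: x_def enc_def)
        with tk[OF that] c show ?thesis by simp
      qed
      then have "x (Suc N') = x N'" by simp
      with s[of N'] show False using lexord_irreflexive[OF Rkb_irrefl] by (simp add: x_def)
    qed
    then have "None \<notin> set (u @ [x N' ! k])" using lu by auto
    then have "P (Suc k) (u @ [x N' ! k])" unfolding P_def using lu tk by auto
    then show ?thesis by blast
  qed
  define F where "F u = (SOME c. P (Suc (length u)) (u @ [c]))" for u
  have Pb: "P k (build F k)" for k
  proof (induction k)
    case 0 then show ?case unfolding P_def by auto
  next
    case (Suc k)
    have "P (Suc (length (build F k))) (build F k @ [F (build F k)])"
    proof -
      have ex: "\<exists>c. P (Suc (length (build F k))) (build F k @ [c])" using step Suc.IH by simp
      show ?thesis unfolding F_def[of "build F k"] by (rule someI_ex[OF ex])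
    qed
    then show ?case by simp
  qed
  define f where "f i = the (build F (Suc i) ! i)" for i
  have "map f [0..<k] \<in> T" for k
  proof -
    from Pb[of k] obtain N where bk: "take k (x N) = build F k" and nn: "None \<notin> set (build F k)"
      unfolding P_def by auto
    have kl: "k \<le> length (s N)"
    proof (rule ccontr)
      assume "\<not> ?thesis"
      then have "take k (x N) = x N" by (simp add: x_def enc_def)
      then have "None \<in> set (take k (x N))" by (simp add: x_def enc_def)
      with bk nn show False by simp
    qed
    then have tx: "take k (x N) = map Some (take k (s N))" by (simp add: x_def enc_def take_map)
    have "build F k = map Some (map f [0..<k])"
    proof (rule nth_equalityI)
      show "length (build F k) = length (map Some (map f [0..<k]))" by simp
    next
      fix i assume i: "i < length (build F k)"
      then have "build F k ! i = take (Suc i) (build F k) ! i" by simp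
      also have "\<dots> = build F (Suc i) ! i" using i by (simp add: take_build)
      finally have e: "build F k ! i = build F (Suc i) ! i" .
      have "build F k ! i \<in> set (build F k)" using i by (rule nth_mem)
      then have "build F k ! i \<noteq> None" using nn by metis
      then have "build F k ! i = Some (f i)" using e by (auto simp: f_def)
      then show "build F k ! i = map Some (map f [0..<k]) ! i"
        using i by simp
    qed
    then have e2: "map Some (take k (s N)) = map Some (map f [0..<k])" using bk tx by metis
    have "take k (s N) = map f [0..<k]" by (rule map_injective[OF e2]) simp
    then show ?thesis using pc[of "s N" k] s[of N] by simp
  qed
  with nb show False by blast
qed

definition kbr :: "nat list set \<Rightarrow> nat list rel" where
  "kbr T = {(a,b). a \<in> T \<and> b \<in> T \<and> (a = b \<or> (enc a, enc b) \<in> lexord Rkb)}"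

lemma enc_inj: "enc a = enc b \<Longrightarrow> a = b"
  unfolding enc_def by (simp add: inj_map_eq_map)

lemma kbr_Field: "Field (kbr T) = T"
  unfolding Field_def kbr_def by auto

lemma lex_irr: "(z, z) \<notin> lexord Rkb"
  using lexord_irreflexive[OF Rkb_irrefl] .

lemma kbr_Well_order:
  assumes "wf {(a,b). a \<in> T \<and> b \<in> T \<and> (enc a, enc b) \<in> lexord Rkb}"
  shows "Well_order (kbr T)"
  unfolding well_order_on_def linear_order_on_def partial_order_on_def preorder_on_def kbr_Field
proof (intro conjI)
  show "kbr T \<subseteq> T \<times> T" unfolding kbr_def by auto
  show "refl_on T (kbr T)" unfolding refl_on_def kbr_def by auto
  show "trans (kbr T)" unfolding trans_def kbr_def
    using lexord_trans[OF _ _ Rkb_trans] by auto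
  show "antisym (kbr T)" unfolding antisym_def kbr_def
    using lexord_trans[OF _ _ Rkb_trans] lex_irr by blast
  show "total_on T (kbr T)" unfolding total_on_def kbr_def
    using lexord_linear[OF Rkb_total] enc_inj by blast
  show "wf (kbr T - Id)"
    by (rule wf_subset[OF assms]) (auto simp: kbr_def)
qed



lemma part3b:
  fixes G H :: "nat \<Rightarrow> nat \<Rightarrow> bool"
  assumes gG: "is_graph G"
    and all: "\<forall>t :: nat rel. Well_order t \<longrightarrow> hom_le (dec_seqs t) (seq_edge G) UNIV H"
  shows "hom_le UNIV G UNIV H"
proof (rule ccontr)
  assume nh: "\<not> hom_le UNIV G UNIV H"
  have irr: "\<And>x. \<not> G x x" using gG unfolding is_graph_def by auto
  define T where "T = {\<sigma> :: nat list. \<forall>i<length \<sigma>. \<forall>j<length \<sigma>. G i j \<longrightarrow> H (\<sigma>!i) (\<sigma>!j)}"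
  have pc: "\<And>\<sigma> k. \<sigma> \<in> T \<Longrightarrow> take k \<sigma> \<in> T" unfolding T_def by auto
  have nb: "\<exists>k. map f [0..<k] \<notin> T" for f
  proof (rule ccontr)
    assume "\<not> (\<exists>k. map f [0..<k] \<notin> T)"
    then have A: "\<forall>k. map f [0..<k] \<in> T" by blast
    have "H (f i) (f j)" if "G i j" for i j
    proof -
      define m where "m = Suc (max i j)"
      have M: "map f [0..<m] \<in> T" using A by blast
      have li: "i < length (map f [0..<m])" and lj: "j < length (map f [0..<m])"
        unfolding m_def by auto
      have "H (map f [0..<m] ! i) (map f [0..<m] ! j)"
        using M[unfolded T_def mem_Collect_eq, rule_format, OF li lj that] .
      moreover have "map f [0..<m] ! i = f i" "map f [0..<m] ! j = f j"
        using li lj by (simp_all del: upt_Suc)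
      ultimately show ?thesis by simp
    qed
    then show False using nh unfolding hom_le_def by blast
  qed
  have WO: "Well_order (kbr T)" by (rule kbr_Well_order[OF kb_wf[OF pc nb]])
  define t where "t = dir_image (kbr T) (to_nat :: nat list \<Rightarrow> nat)"
  have Wt: "Well_order t" unfolding t_def
    by (rule Well_order_dir_image[OF WO]) (meson inj_to_nat inj_on_subset subset_UNIV)
  have tI: "(to_nat a, to_nat b) \<in> t" if "a \<in> T" "b \<in> T" "(enc a, enc b) \<in> lexord Rkb" for a b
    unfolding t_def dir_image_def kbr_def using that by blast
  have tF: "to_nat a \<in> Field t" if "a \<in> T" for a
  proof -
    have "(to_nat a, to_nat a) \<in> t" unfolding t_def dir_image_def kbr_def using that by blast
    then show ?thesis by (rule FieldI1)
  qed
  from all Wt obtain \<phi> where \<phi>: "\<And>x y. x \<in> dec_seqs t \<Longrightarrow> y \<in> dec_seqs t \<Longrightarrow> seq_edge G x y \<Longrightarrow> H (\<phi> x) (\<phi> y)"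
    unfolding hom_le_def by blast
  define cd where "cd \<nu> = to_nat (map (\<lambda>i. \<phi> (take i \<nu>)) [0..<Suc (length \<nu>)])" for \<nu>
  define nu where "nu = build cd"
  have len_nu[simp]: "length (nu n) = n" for n unfolding nu_def by simp
  have take_nu: "take i (nu n) = nu i" if "i \<le> n" for i n unfolding nu_def using that by (rule take_build)
  have nu_Suc: "nu (Suc n) = nu n @ [cd (nu n)]" for n unfolding nu_def by simp
  define S where "S n = map (\<lambda>i. \<phi> (nu i)) [0..<Suc n]" for n
  have cd_nu: "cd (nu n) = to_nat (S n)" for n
    unfolding cd_def S_def len_nu by (rule arg_cong[of _ _ to_nat]) (simp add: take_nu)
  have dec_take: "take i \<nu> \<in> dec_seqs t" if "\<nu> \<in> dec_seqs t" for i \<nu>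
    using that unfolding dec_seqs_def by (auto simp: sorted_wrt_take dest: in_set_takeD)
  have sp: "strict_prefix (nu i) (nu j)" if "i < j" for i j
  proof -
    have "nu i = take i (nu j)" using take_nu[of i j] that by simp
    then have "prefix (nu i) (nu j)" by (simp add: take_is_prefix)
    moreover have "nu i \<noteq> nu j" using that len_nu by (metis less_irrefl)
    ultimately show ?thesis by (simp add: strict_prefix_def)
  qed
  have edge: "seq_edge G (nu i) (nu j)" if "G i j" for i j
  proof -
    have "i \<noteq> j" using that irr by auto
    then have "strict_prefix (nu i) (nu j) \<or> strict_prefix (nu j) (nu i)"
      using sp by (metis linorder_neqE_nat)
    then show ?thesis unfolding seq_edge_def using that by simp
  qed
  have ST: "S n \<in> T" if "nu n \<in> dec_seqs t" for n
    unfolding T_def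
  proof (intro CollectI allI impI)
    fix i j assume i: "i < length (S n)" and j: "j < length (S n)" and g: "G i j"
    have "i \<le> n" "j \<le> n" using i j by (auto simp: S_def)
    then have "nu i \<in> dec_seqs t" "nu j \<in> dec_seqs t"
      using dec_take[OF that] take_nu by metis+
    then have "H (\<phi> (nu i)) (\<phi> (nu j))" using \<phi> edge[OF g] by blast
    then show "H (S n ! i) (S n ! j)" using i j by (simp add: S_def nth_append del: upt_Suc)
  qed
  have nu_map: "nu n = map (\<lambda>k. cd (nu k)) [0..<n]" for n
    by (induction n) (simp_all add: nu_Suc nu_def[symmetric], simp add: nu_def)
  have lexS: "(enc (S n), enc (S k)) \<in> lexord Rkb" if "k < n" for k n
  proof -
    have "[0..<Suc n] = [0..<Suc k] @ [Suc k..<Suc n]" using that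
      using upt_add_eq_append[of 0 "Suc k" "n - k"] by simp
    moreover have "[Suc k..<Suc n] = Suc k # [Suc (Suc k)..<Suc n]" using that by (simp add: upt_conv_Cons)
    ultimately have "S n = S k @ \<phi> (nu (Suc k)) # map (\<lambda>i. \<phi> (nu i)) [Suc (Suc k)..<Suc n]"
      unfolding S_def by simp
    then have "enc (S n) = map Some (S k) @ Some (\<phi> (nu (Suc k))) # (map Some (map (\<lambda>i. \<phi> (nu i)) [Suc (Suc k)..<Suc n]) @ [None])"
      by (simp add: enc_def)
    moreover have "enc (S k) = map Some (S k) @ None # []" by (simp add: enc_def)
    moreover have "(Some (\<phi> (nu (Suc k))), None) \<in> Rkb" by (simp add: Rkb_def)
    ultimately show ?thesis by (metis lexord_append_left_rightI)
  qed
  have dec: "nu n \<in> dec_seqs t" for n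
  proof (induction n)
    case 0 then show ?case by (simp add: nu_def dec_seqs_def)
  next
    case (Suc n)
    have Sn: "S n \<in> T" using ST[OF Suc.IH] .
    have c: "cd (nu n) \<in> Field t" using tF[OF Sn] cd_nu by simp
    have rel: "(cd (nu n), x) \<in> t \<and> cd (nu n) \<noteq> x" if "x \<in> set (nu n)" for x
    proof -
      from that obtain k where k: "k < n" "x = cd (nu k)" using nu_map[of n] by auto
      have "nu k \<in> dec_seqs t" using dec_take[OF Suc.IH, of k] take_nu[of k n] k by simp
      then have Sk: "S k \<in> T" by (rule ST)
      have "(to_nat (S n), to_nat (S k)) \<in> t" using tI[OF Sn Sk lexS[OF k(1)]] .
      moreover have "S n \<noteq> S k" using k(1) by (metis S_def length_map length_upt less_irrefl minus_nat.diff_0 Suc_inject)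
      then have "to_nat (S n) \<noteq> to_nat (S k)" by simp
      ultimately show ?thesis using k cd_nu by simp
    qed
    show ?case using Suc.IH c rel unfolding nu_Suc dec_seqs_def
      by (auto simp: sorted_wrt_append)
  qed
  have "H (\<phi> (nu i)) (\<phi> (nu j))" if "G i j" for i j
    using \<phi>[OF dec dec edge[OF that]] .
  then have "hom_le UNIV G UNIV H" unfolding hom_le_def by (intro exI[of _ "\<lambda>i. \<phi> (nu i)"]) auto
  then show False using nh by simp
qed


theorem lemma8:
  fixes G H :: "nat \<Rightarrow> nat \<Rightarrow> bool" and r :: "'a rel" and s :: "'b rel"
  assumes "is_graph G" and "is_graph H"
  shows "(Well_order r \<longrightarrow> hom_le (dec_seqs r) (seq_edge G) UNIV G)
    \<and> ((r, s) \<in> ordLeq \<longrightarrow> hom_le (dec_seqs r) (seq_edge G) (dec_seqs s) (seq_edge G))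
    \<and> (hom_le UNIV G UNIV H \<longleftrightarrow>
         (\<forall>t :: nat rel. Well_order t \<longrightarrow> hom_le (dec_seqs t) (seq_edge G) UNIV H))"
  using part1 part2 part3a part3b[OF assms(1)] by blast

end
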